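(* Let $m,n\ge 1$ and $k\ge 2$. Then $\dim U_{m,k}=M_{k-1}(n)=\binom{n+k-2}{n}$.
   Context: $mB^n=\{0,1,\ldots,m\}^n$. A polynomial has a zero of multiplicity at least $k$ at $\mathbf a$ if all its partial derivatives of order less than $k$ vanish at $\mathbf a$. For an integer $k\ge 2$, a polynomial $P\in\mathbb{R}[x_1,\ldots,x_n]$ is called $(m,k)$-reduced if two conditions hold: $\deg P\le mn+(m+1)(k-1)-1$, and no monomial of $P$ is divisible by $x_{i_1}^{m+1}\cdots x_{i_k}^{m+1}$ for any indices $i_1,\ldots,i_k$ (not necessarily distinct). $U_{m,k}$ is the real vector space of $(m,k)$-reduced polynomials that have a zero of multiplicity at least $k$ at every point of $mB^n\setminus\{\mathbf 0\}$. $M_j(n)=\binom{n+j-1}{n}$. *)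

theory Defs
  imports "HOL-Analysis.Analysis" "HOL-Library.Function_Algebras"
begin

text \<open>Real polynomials in the variables x_i, i ranging over a finite type 'n
 (so n = CARD('n)), represented by their coefficient functions on exponent
 vectors 'n => nat.\<close>

type_synonym 'n rpoly = "('n \<Rightarrow> nat) \<Rightarrow> real"

definition is_poly :: "('n::finite) rpoly \<Rightarrow> bool" where
  "is_poly P \<longleftrightarrow> finite {\<alpha>. P \<alpha> \<noteq> 0}"

definition mdeg :: "('n::finite \<Rightarrow> nat) \<Rightarrow> nat" where
  "mdeg \<alpha> = (\<Sum>i\<in>UNIV. \<alpha> i)"

definition deg_le :: "('n::finite) rpoly \<Rightarrow> nat \<Rightarrow> bool" where
  "deg_le P d \<longleftrightarrow> (\<forall>\<alpha>. P \<alpha> \<noteq> 0 \<longrightarrow> mdeg \<alpha> \<le> d)"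

definition peval :: "('n::finite) rpoly \<Rightarrow> ('n \<Rightarrow> real) \<Rightarrow> real" where
  "peval P a = (\<Sum>\<alpha>\<in>{\<alpha>. P \<alpha> \<noteq> 0}. P \<alpha> * (\<Prod>i\<in>UNIV. a i ^ \<alpha> i))"

definition pdiff :: "'n \<Rightarrow> ('n::finite) rpoly \<Rightarrow> 'n rpoly" where
  "pdiff i P = (\<lambda>\<alpha>. real (\<alpha> i + 1) * P (\<alpha>(i := \<alpha> i + 1)))"

definition pdiffs :: "'n list \<Rightarrow> ('n::finite) rpoly \<Rightarrow> 'n rpoly" where
  "pdiffs is P = fold pdiff is P"

definition zero_mult_ge :: "('n::finite) rpoly \<Rightarrow> nat \<Rightarrow> ('n \<Rightarrow> real) \<Rightarrow> bool" where
  "zero_mult_ge P k a \<longleftrightarrow> (\<forall>is. length is < k \<longrightarrow> peval (pdiffs is P) a = 0)"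

text \<open>(m,k)-reduced: degree bound, and no monomial divisible by
  x_{i_1}^{m+1} ... x_{i_k}^{m+1} (indices not necessarily distinct).\<close>
definition reduced :: "nat \<Rightarrow> nat \<Rightarrow> ('n::finite) rpoly \<Rightarrow> bool" where
  "reduced m k P \<longleftrightarrow>
     deg_le P (m * CARD('n) + (m + 1) * (k - 1) - 1) \<and>
     (\<forall>\<alpha>. P \<alpha> \<noteq> 0 \<longrightarrow>
        \<not> (\<exists>is::'n list. length is = k \<and> (\<forall>i. (m + 1) * count_list is i \<le> \<alpha> i)))"

definition U :: "nat \<Rightarrow> nat \<Rightarrow> ('n::finite) rpoly set" where
  "U m k = {P. is_poly P \<and> reduced m k P \<and>
     (\<forall>a::'n \<Rightarrow> nat. (\<forall>i. a i \<le> m) \<and> a \<noteq> (\<lambda>_. 0) \<longrightarrow> zero_mult_ge P k (\<lambda>i. real (a i)))}"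

definition pscale :: "real \<Rightarrow> ('n::finite) rpoly \<Rightarrow> 'n rpoly" where
  "pscale r P = (\<lambda>\<alpha>. r * P \<alpha>)"

definition M :: "nat \<Rightarrow> nat \<Rightarrow> nat" where
  "M j n = (n + j - 1) choose n"

end

theory Submission
  imports Defs "HOL-Computational_Algebra.Polynomial" "HOL-Library.FuncSet"
begin


lemma fun_sum_apply: "(\<Sum>x\<in>A. f x) a = (\<Sum>x\<in>A. f x a)" for f :: "'a \<Rightarrow> 'b \<Rightarrow> 'c::comm_monoid_add"
  by (induction A rule: infinite_finite_induct) auto

definition tens :: "('n::finite \<Rightarrow> real poly) \<Rightarrow> 'n rpoly" where
  "tens h = (\<lambda>\<alpha>. \<Prod>i\<in>UNIV. coeff (h i) (\<alpha> i))"

definition box :: "('n::finite \<Rightarrow> nat) \<Rightarrow> ('n \<Rightarrow> nat) set" where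
  "box N = {\<alpha>. \<forall>i. \<alpha> i \<le> N i}"

lemma box_PiE: "box N = PiE UNIV (\<lambda>i. {..N i})"
  by (auto simp: box_def PiE_def Pi_def extensional_def)

lemma finite_box: "finite (box N)" by (simp add: box_PiE finite_PiE)

lemma tens_supp: "tens h \<alpha> \<noteq> 0 \<Longrightarrow> \<alpha> i \<le> degree (h i)"
proof -
  assume "tens h \<alpha> \<noteq> 0"
  then have "coeff (h i) (\<alpha> i) \<noteq> 0" by (simp add: tens_def)
  then show ?thesis by (rule le_degree)
qed

lemma tens_supp_box: "(\<And>i. degree (h i) \<le> N i) \<Longrightarrow> {\<alpha>. tens h \<alpha> \<noteq> 0} \<subseteq> box N"
  unfolding box_def using tens_supp by (fastforce intro: order_trans)

lemma peval_sub: assumes "finite A" "{\<alpha>. P \<alpha> \<noteq> 0} \<subseteq> A"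
  shows "peval P a = (\<Sum>\<alpha>\<in>A. P \<alpha> * (\<Prod>i\<in>UNIV. a i ^ \<alpha> i))"
  unfolding peval_def by (rule sum.mono_neutral_left) (use assms in auto)

lemma peval_tens: "peval (tens h) a = (\<Prod>i\<in>UNIV. poly (h i) (a i))"
proof -
  define N where "N = (\<lambda>i. degree (h i))"
  have "peval (tens h) a = (\<Sum>\<alpha>\<in>box N. tens h \<alpha> * (\<Prod>i\<in>UNIV. a i ^ \<alpha> i))"
    by (rule peval_sub) (auto simp: finite_box N_def intro!: tens_supp_box)
  also have "\<dots> = (\<Sum>\<alpha>\<in>PiE UNIV (\<lambda>i. {..N i}). \<Prod>i\<in>UNIV. coeff (h i) (\<alpha> i) * a i ^ \<alpha> i)"
    by (simp add: box_PiE tens_def prod.distrib)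
  also have "\<dots> = (\<Prod>i\<in>UNIV. \<Sum>d\<in>{..N i}. coeff (h i) d * a i ^ d)"
    by (rule prod_sum_PiE[symmetric]) auto
  also have "\<dots> = (\<Prod>i\<in>UNIV. poly (h i) (a i))"
    by (simp add: poly_altdef N_def)
  finally show ?thesis .
qed

lemma pdiff_tens: "pdiff j (tens h) = tens (h(j := pderiv (h j)))"
proof
  fix \<alpha> :: "'a \<Rightarrow> nat"
  have "pdiff j (tens h) \<alpha> = real (\<alpha> j + 1) * (\<Prod>i\<in>UNIV. coeff (h i) ((\<alpha>(j := \<alpha> j + 1)) i))"
    by (simp add: pdiff_def tens_def)
  also have "\<dots> = real (\<alpha> j + 1) * (coeff (h j) (\<alpha> j + 1) * (\<Prod>i\<in>UNIV-{j}. coeff (h i) (\<alpha> i)))"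
    by (subst prod.remove[of _ j]) (auto intro!: prod.cong)
  also have "\<dots> = coeff (pderiv (h j)) (\<alpha> j) * (\<Prod>i\<in>UNIV-{j}. coeff ((h(j := pderiv (h j))) i) (\<alpha> i))"
    by (simp add: coeff_pderiv)
  also have "\<dots> = tens (h(j := pderiv (h j))) \<alpha>"
    unfolding tens_def by (subst prod.remove[of _ j]) auto
  finally show "pdiff j (tens h) \<alpha> = tens (h(j := pderiv (h j))) \<alpha>" .
qed

lemma pdiffs_tens: "pdiffs is (tens h) = tens (\<lambda>i. (pderiv ^^ count_list is i) (h i))"
proof (induction "is" arbitrary: h)
  case Nil
  then show ?case by (simp add: pdiffs_def)
next
  case (Cons j js)
  have "pdiffs (j # js) (tens h) = pdiffs js (tens (h(j := pderiv (h j))))"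
    by (simp add: pdiffs_def pdiff_tens)
  also have "\<dots> = tens (\<lambda>i. (pderiv ^^ count_list (j#js) i) (h i))"
    unfolding Cons by (rule arg_cong[where f=tens]) (auto simp: fun_eq_iff funpow_Suc_right funpow_swap1)
  finally show ?case .
qed

lemma pdiff_lin: "pdiff i (\<lambda>\<alpha>. \<Sum>x\<in>I. c x * f x \<alpha>) = (\<lambda>\<alpha>. \<Sum>x\<in>I. c x * pdiff i (f x) \<alpha>)"
  by (simp add: pdiff_def sum_distrib_left mult.left_commute)

lemma pdiffs_lin: "pdiffs is (\<lambda>\<alpha>. \<Sum>x\<in>I. c x * f x \<alpha>) = (\<lambda>\<alpha>. \<Sum>x\<in>I. c x * pdiffs is (f x) \<alpha>)"
proof (induction "is" arbitrary: f)
  case Nil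
  then show ?case by (simp add: pdiffs_def)
next
  case (Cons j js)
  show ?case using Cons[of "\<lambda>x. pdiff j (f x)"] by (simp add: pdiffs_def pdiff_lin)
qed

lemma peval_lin:
  assumes "finite I" "finite A" "\<And>x. x \<in> I \<Longrightarrow> {\<alpha>. f x \<alpha> \<noteq> 0} \<subseteq> A"
  shows "peval (\<lambda>\<alpha>. \<Sum>x\<in>I. c x * f x \<alpha>) a = (\<Sum>x\<in>I. c x * peval (f x) a)"
proof -
  have s: "{\<alpha>. (\<Sum>x\<in>I. c x * f x \<alpha>) \<noteq> 0} \<subseteq> A"
  proof
    fix \<alpha> assume "\<alpha> \<in> {\<alpha>. (\<Sum>x\<in>I. c x * f x \<alpha>) \<noteq> 0}"
    then obtain x where "x \<in> I" "c x * f x \<alpha> \<noteq> 0" by (auto elim: sum.not_neutral_contains_not_neutral)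
    then show "\<alpha> \<in> A" using assms(3) by auto
  qed
  have "peval (\<lambda>\<alpha>. \<Sum>x\<in>I. c x * f x \<alpha>) a = (\<Sum>\<alpha>\<in>A. (\<Sum>x\<in>I. c x * f x \<alpha>) * (\<Prod>i\<in>UNIV. a i ^ \<alpha> i))"
    by (rule peval_sub[OF assms(2) s])
  also have "\<dots> = (\<Sum>x\<in>I. c x * (\<Sum>\<alpha>\<in>A. f x \<alpha> * (\<Prod>i\<in>UNIV. a i ^ \<alpha> i)))"
    by (simp add: sum_distrib_right sum_distrib_left mult.assoc) (rule sum.swap)
  also have "\<dots> = (\<Sum>x\<in>I. c x * peval (f x) a)"
    by (intro sum.cong refl arg_cong2[where f="(*)"]) (rule peval_sub[OF assms(2), symmetric], use assms(3) in auto)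
  finally show ?thesis .
qed

lemma pderiv_Lpow:
  "pderiv ([:-b,1:]^Suc j * h) = [:-b,1:]^j * (smult (of_nat (Suc j)) h + [:-b,1:] * pderiv h)"
proof -
  have d: "pderiv [:-b,1:] = 1" by (simp add: pderiv_pCons)
  have "pderiv ([:-b,1:]^Suc j * h) = [:-b,1:]^Suc j * pderiv h + h * (smult (of_nat (Suc j)) ([:-b,1:]^j) * 1)"
    by (simp only: pderiv_mult pderiv_power_Suc d)
  also have "\<dots> = [:-b,1:]^j * (smult (of_nat (Suc j)) h + [:-b,1:] * pderiv h)"
    by (simp only: power_Suc distrib_left mult_smult_left mult_smult_right mult_1_right mult_1_left mult.commute mult.left_commute add.commute)
  finally show ?thesis .
qed

lemma V1: "poly ((pderiv ^^ j) ([:-b,1:]^j * h)) b = fact j * poly h (b::real)"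
proof (induction j arbitrary: h)
  case 0 then show ?case by simp
next
  case (Suc j)
  show ?case
    by (simp only: funpow_Suc_right o_apply pderiv_Lpow Suc) (simp add: algebra_simps)
qed

lemma V2: "s < j \<Longrightarrow> poly ((pderiv ^^ s) ([:-b,1:]^j * h)) (b::real) = 0"
proof (induction s arbitrary: j h)
  case 0 then show ?case by simp
next
  case (Suc s)
  then obtain j' where j: "j = Suc j'" "s < j'" by (cases j) auto
  show ?case
    by (simp only: funpow_Suc_right o_apply j pderiv_Lpow Suc.IH[OF j(2)])
qed



definition FF :: "nat \<Rightarrow> real poly" where
  "FF m = (\<Prod>j\<in>{..m}. [:- real j, 1:])"
definition LL :: "nat \<Rightarrow> nat \<Rightarrow> real poly" where
  "LL m a = (\<Prod>j\<in>{..m}-{a}. [:- real j, 1:])"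
definition pp :: "nat \<Rightarrow> nat \<Rightarrow> nat \<Rightarrow> real poly" where
  "pp m s a = FF m ^ s * LL m a"

lemma FF_split: "a \<le> m \<Longrightarrow> FF m = [:- real a, 1:] * LL m a"
  unfolding FF_def LL_def by (subst prod.remove[of _ a]) auto

lemma LL_root: "j \<le> m \<Longrightarrow> j \<noteq> a \<Longrightarrow> poly (LL m a) (real j) = 0"
  unfolding LL_def poly_prod by (rule prod_zero) (auto intro!: bexI[of _ j])

lemma LL_nz: "poly (LL m a) (real a) \<noteq> 0"
  unfolding LL_def poly_prod by (subst prod_zero_iff) auto

lemma lin_nz: "[:- real j, 1:] \<noteq> 0" by simp

lemma degree_LL: "a \<le> m \<Longrightarrow> degree (LL m a) = m"
proof -
  assume a: "a \<le> m"
  have "degree (LL m a) = (\<Sum>j\<in>{..m}-{a}. degree [:- real j, 1:])"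
    unfolding LL_def by (rule degree_prod_eq_sum_degree) auto
  also have "\<dots> = card ({..m}-{a})" by simp
  also have "\<dots> = m" using a by simp
  finally show ?thesis .
qed

lemma lead_LL: "lead_coeff (LL m a) = 1"
  unfolding LL_def lead_coeff_prod by simp

lemma FF_nz: "FF m \<noteq> 0"
  unfolding FF_def by (simp add: prod_zero_iff)

lemma LL_nz0: "LL m a \<noteq> 0"
  unfolding LL_def by (simp add: prod_zero_iff)

lemma degree_FF: "degree (FF m) = m + 1"
proof -
  have "degree (FF m) = (\<Sum>j\<in>{..m}. degree [:- real j, 1:])"
    unfolding FF_def by (rule degree_prod_eq_sum_degree) auto
  then show ?thesis by simp
qed

lemma lead_FF: "lead_coeff (FF m) = 1"
  unfolding FF_def lead_coeff_prod by simp

lemma degree_pp: "a \<le> m \<Longrightarrow> degree (pp m s a) = (m+1) * s + m"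
  unfolding pp_def using FF_nz LL_nz0
  by (simp add: degree_mult_eq degree_power_eq degree_FF degree_LL)

lemma lead_pp: "lead_coeff (pp m s a) = 1"
  unfolding pp_def by (simp add: lead_coeff_mult lead_coeff_power lead_FF lead_LL)

lemma pp_at: assumes "b \<le> m" shows "pp m s a = [:- real b, 1:]^s * (LL m b ^ s * LL m a)"
  by (simp only: pp_def FF_split[OF assms] power_mult_distrib mult.assoc)

lemma J1: "b \<le> m \<Longrightarrow> poly ((pderiv^^s) (pp m s a)) (real b)
   = fact s * (poly (LL m b) (real b) ^ s * poly (LL m a) (real b))"
  by (simp add: pp_at V1)

lemma J2: "b \<le> m \<Longrightarrow> t < s \<Longrightarrow> poly ((pderiv^^t) (pp m s a)) (real b) = 0"
  by (simp add: pp_at V2)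

lemma J1_zero: "b \<le> m \<Longrightarrow> a \<noteq> b \<Longrightarrow> poly ((pderiv^^s) (pp m s a)) (real b) = 0"
  by (simp add: J1 LL_root)

lemma J1_nz: "b \<le> m \<Longrightarrow> poly ((pderiv^^s) (pp m s b)) (real b) \<noteq> 0"
  by (simp add: J1 LL_nz)

lemma degree_funpow_pderiv: "degree ((pderiv^^t) p) \<le> degree (p::real poly)"
proof (induction t)
  case (Suc t)
  have "degree (pderiv ((pderiv^^t) p)) = degree ((pderiv^^t) p) - 1" by (rule degree_pderiv)
  then show ?case using Suc by simp
qed simp



definition G :: "nat \<Rightarrow> ('n::finite \<Rightarrow> nat) set" where "G m = box (\<lambda>_. m)"
definition Q :: "nat \<Rightarrow> ('n::finite \<Rightarrow> nat) set" where "Q d = {q. sum q UNIV \<le> d}"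
definition II :: "nat \<Rightarrow> nat \<Rightarrow> (('n::finite \<Rightarrow> nat) \<times> ('n \<Rightarrow> nat)) set" where
  "II m k = Q (k-1) \<times> G m"
definition ee :: "nat \<Rightarrow> ('n::finite \<Rightarrow> nat) \<times> ('n \<Rightarrow> nat) \<Rightarrow> 'n rpoly" where
  "ee m x = tens (\<lambda>i. pp m (fst x i) (snd x i))"
definition Tc :: "nat \<Rightarrow> nat \<Rightarrow> (('n::finite \<Rightarrow> nat) \<times> ('n \<Rightarrow> nat) \<Rightarrow> real) \<Rightarrow> 'n rpoly" where
  "Tc m k c = (\<lambda>\<alpha>. \<Sum>x\<in>II m k. c x * ee m x \<alpha>)"
definition JF :: "nat \<Rightarrow> nat \<Rightarrow> (('n::finite \<Rightarrow> nat) \<times> ('n \<Rightarrow> nat) \<Rightarrow> real) \<Rightarrow> ('n \<Rightarrow> nat) \<Rightarrow> ('n \<Rightarrow> nat) \<Rightarrow> real" where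
  "JF m k c b \<beta> = (\<Sum>x\<in>II m k. c x * (\<Prod>i\<in>UNIV. poly ((pderiv^^\<beta> i) (pp m (fst x i) (snd x i))) (real (b i))))"

lemma le_sumq: "(q::'n::finite \<Rightarrow> nat) i \<le> sum q UNIV"
  using sum.remove[of UNIV i q] by simp

lemma Q_box: "Q d \<subseteq> box (\<lambda>_. d)"
  unfolding Q_def box_def using le_sumq order_trans by blast

lemma finite_Q: "finite (Q d)"
  using Q_box finite_box finite_subset by blast

lemma finite_G: "finite (G m)" by (simp add: G_def finite_box)

lemma finite_II: "finite (II m k)" by (simp add: II_def finite_Q finite_G)

lemma supp_pdiffs_ee:
  assumes "x \<in> II m k"
  shows "{\<alpha>. pdiffs is (ee m x) \<alpha> \<noteq> 0} \<subseteq> box (\<lambda>_. (m+1) * (k-1) + m)"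
proof -
  obtain q a where x: "x = (q,a)" "q \<in> Q (k-1)" "a \<in> G m" using assms unfolding II_def by auto
  have "degree ((pderiv ^^ count_list is i) (pp m (q i) (a i))) \<le> (m+1) * (k-1) + m" for i
  proof -
    have "q i \<le> k - 1" using x(2) le_sumq[of q i] unfolding Q_def by auto
    moreover have "a i \<le> m" using x(3) unfolding G_def box_def by auto
    ultimately have "degree (pp m (q i) (a i)) \<le> (m+1) * (k-1) + m"
      using mult_le_mono2[of "q i" "k-1" "m+1"] by (simp only: degree_pp) simp
    then show ?thesis using degree_funpow_pderiv order_trans by blast
  qed
  then show ?thesis unfolding ee_def pdiffs_tens x by (intro tens_supp_box) auto
qed

lemma jet_formula:
  "peval (pdiffs is (Tc m k c)) (\<lambda>i. real (b i)) = JF m k c b (count_list is)"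
proof -
  have "peval (pdiffs is (Tc m k c)) (\<lambda>i. real (b i))
     = (\<Sum>x\<in>II m k. c x * peval (pdiffs is (ee m x)) (\<lambda>i. real (b i)))"
    unfolding Tc_def pdiffs_lin
    by (rule peval_lin[OF finite_II finite_box supp_pdiffs_ee])
  also have "\<dots> = JF m k c b (count_list is)"
    unfolding JF_def ee_def pdiffs_tens peval_tens ..
  finally show ?thesis .
qed

lemma kappa_nz: "b \<in> G m \<Longrightarrow> (\<Prod>i\<in>UNIV. poly ((pderiv^^q i) (pp m (q i) (b i))) (real (b i))) \<noteq> 0"
  by (subst prod_zero_iff) (auto simp: G_def box_def J1_nz)

lemma step:
  assumes q: "q \<in> Q (k-1)" and b: "b \<in> G m"
  and IH: "\<And>q' a. q' \<in> Q (k-1) \<Longrightarrow> sum q' UNIV < sum q UNIV \<Longrightarrow> a \<in> G m \<Longrightarrow> c (q',a) = 0"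
  shows "JF m k c b q = c (q,b) * (\<Prod>i\<in>UNIV. poly ((pderiv^^q i) (pp m (q i) (b i))) (real (b i)))"
proof -
  define t where "t x = c x * (\<Prod>i\<in>UNIV. poly ((pderiv^^q i) (pp m (fst x i) (snd x i))) (real (b i)))" for x
  have bm: "b i \<le> m" for i using b unfolding G_def box_def by auto
  have qb: "(q,b) \<in> II m k" using q b unfolding II_def by auto
  have z: "t x = 0" if x: "x \<in> II m k - {(q,b)}" for x
  proof -
    obtain q' a where xx: "x = (q',a)" "q' \<in> Q (k-1)" "a \<in> G m" using x unfolding II_def by auto
    show ?thesis
    proof (cases "\<exists>i. q i < q' i")
      case True
      then obtain i where i: "q i < q' i" by auto
      have "poly ((pderiv^^q i) (pp m (q' i) (a i))) (real (b i)) = 0"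
        by (rule J2[OF bm i])
      then show ?thesis unfolding t_def xx by (auto intro!: prod_zero)
    next
      case False
      then have le: "\<forall>i\<in>UNIV. q' i \<le> q i" by (auto simp: not_less)
      show ?thesis
      proof (cases "q' = q")
        case True
        then have "a \<noteq> b" using x xx by auto
        then obtain i where i: "a i \<noteq> b i" by auto
        have "poly ((pderiv^^q i) (pp m (q i) (a i))) (real (b i)) = 0"
          by (rule J1_zero[OF bm i])
        then show ?thesis unfolding t_def xx True by (auto intro!: prod_zero)
      next
        case False
        then obtain i where "q' i \<noteq> q i" by auto
        with le have "q' i < q i" by (simp add: order_less_le)
        then have "sum q' UNIV < sum q UNIV"
          using le by (intro sum_strict_mono_ex1) auto
        then have "c x = 0" using IH xx by auto
        then show ?thesis unfolding t_def by simp
      qed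
    qed
  qed
  have "JF m k c b q = (\<Sum>x\<in>II m k. t x)" unfolding JF_def t_def ..
  also have "\<dots> = t (q,b) + (\<Sum>x\<in>II m k - {(q,b)}. t x)"
    by (rule sum.remove[OF finite_II qb])
  also have "(\<Sum>x\<in>II m k - {(q,b)}. t x) = 0" using z by simp
  finally show ?thesis unfolding t_def by simp
qed

lemma top:
  fixes q :: "'n::finite \<Rightarrow> nat"
  assumes q: "q \<in> Q (k-1)" and sq: "sum q UNIV = k-1"
  shows "Tc m k c (\<lambda>i. (m+1) * q i + m) = (\<Sum>a\<in>G m. c (q,a))"
proof -
  define s where "s = (\<lambda>i. (m+1) * q i + m)"
  have e: "ee m (q',a) s = (if q' = q then 1 else 0)" if q': "q' \<in> Q (k-1)" and a: "a \<in> G m" for q' a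
  proof -
    have am: "a i \<le> m" for i using a unfolding G_def box_def by auto
    show ?thesis
    proof (cases "q' = q")
      case True
      have "coeff (pp m (q i) (a i)) ((m+1) * q i + m) = 1" for i
        using lead_pp[of m "q i" "a i"] degree_pp[OF am[of i], of "q i"] by simp
      then show ?thesis unfolding ee_def tens_def s_def using True by simp
    next
      case False
      have "\<exists>i. q' i < q i"
      proof (rule ccontr)
        assume "\<not> (\<exists>i. q' i < q i)"
        then have le: "\<forall>i\<in>UNIV. q i \<le> q' i" by (auto simp: not_less)
        from False obtain i where "q' i \<noteq> q i" by auto
        with le have "q i < q' i" by (simp add: order_less_le)
        then have "sum q UNIV < sum q' UNIV" using le by (intro sum_strict_mono_ex1) auto
        then show False using q' sq unfolding Q_def by simp
      qed
      then obtain i where i: "q' i < q i" by auto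
      have "coeff (pp m (q' i) (a i)) (s i) = 0"
        by (rule coeff_eq_0) (use i mult_less_mono2[OF i, of "m+1"] in \<open>simp add: s_def degree_pp[OF am]\<close>)
      then show ?thesis unfolding ee_def tens_def using False by (auto intro!: prod_zero)
    qed
  qed
  have "Tc m k c s = (\<Sum>q'\<in>Q (k-1). \<Sum>a\<in>G m. c (q',a) * ee m (q',a) s)"
    unfolding Tc_def II_def by (simp add: sum.cartesian_product)
  also have "\<dots> = (\<Sum>q'\<in>Q (k-1). if q' = q then (\<Sum>a\<in>G m. c (q,a)) else 0)"
  proof (rule sum.cong[OF refl])
    fix q' :: "'n \<Rightarrow> nat" assume q': "q' \<in> Q (k-1)"
    show "(\<Sum>a\<in>G m. c (q',a) * ee m (q',a) s) = (if q' = q then (\<Sum>a\<in>G m. c (q,a)) else 0)"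
      by (cases "q' = q") (simp_all add: e[OF q'] e[OF q] cong: sum.cong)
  qed
  also have "\<dots> = (\<Sum>a\<in>G m. c (q,a))" using q by (simp add: sum.delta[OF finite_Q])
  finally show ?thesis unfolding s_def .
qed



context vector_space begin

lemma subspace_ker:
  assumes V: "subspace V"
    and add: "\<And>j x y. j\<in>J \<Longrightarrow> x\<in>V \<Longrightarrow> y\<in>V \<Longrightarrow> \<phi> j (x+y) = \<phi> j x + \<phi> j y"
    and hom: "\<And>j c x. j\<in>J \<Longrightarrow> x\<in>V \<Longrightarrow> \<phi> j (scale c x) = c * \<phi> j x"
  shows "subspace {x\<in>V. \<forall>j\<in>J. \<phi> j x = 0}"
  unfolding subspace_def
proof (intro conjI ballI allI)
  have "0 \<in> V" using V subspace_0 by blast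
  have "\<phi> j 0 = 0" if "j \<in> J" for j
    using hom[OF that \<open>0 \<in> V\<close>, of 0] by simp
  then show "0 \<in> {x\<in>V. \<forall>j\<in>J. \<phi> j x = 0}" using \<open>0 \<in> V\<close> by simp
next
  fix x y assume "x \<in> {x\<in>V. \<forall>j\<in>J. \<phi> j x = 0}" "y \<in> {x\<in>V. \<forall>j\<in>J. \<phi> j x = 0}"
  then show "x + y \<in> {x\<in>V. \<forall>j\<in>J. \<phi> j x = 0}"
    using add V subspace_add by auto
next
  fix c x assume "x \<in> {x\<in>V. \<forall>j\<in>J. \<phi> j x = 0}"
  then show "scale c x \<in> {x\<in>V. \<forall>j\<in>J. \<phi> j x = 0}"
    using hom V subspace_scale by auto
qed

lemma dim_cut1:
  assumes K: "subspace K" and KW: "K \<subseteq> span W" and W: "finite W"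
    and add: "\<And>x y. x\<in>K \<Longrightarrow> y\<in>K \<Longrightarrow> \<phi> (x+y) = \<phi> x + \<phi> y"
    and hom: "\<And>c x. x\<in>K \<Longrightarrow> \<phi> (scale c x) = c * \<phi> x"
  shows "dim K \<le> dim {x\<in>K. \<phi> x = 0} + 1"
proof (cases "\<forall>x\<in>K. \<phi> x = 0")
  case True
  then have "{x\<in>K. \<phi> x = 0} = K" by auto
  then show ?thesis by simp
next
  case False
  then obtain v where v: "v \<in> K" "\<phi> v \<noteq> 0" by auto
  let ?K0 = "{x\<in>K. \<phi> x = 0}"
  obtain B where B: "B \<subseteq> ?K0" "independent B" "?K0 \<subseteq> span B" "card B = dim ?K0"
    by (rule basis_exists)
  have "B \<subseteq> span W" using B(1) KW by auto
  then have finB: "finite B" using independent_span_bound[OF W B(2)] by auto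
  have "K \<subseteq> span (insert v B)"
  proof
    fix x assume x: "x \<in> K"
    define y where "y = x + scale (- (\<phi> x / \<phi> v)) v"
    have yK: "y \<in> K" unfolding y_def using x v K by (intro subspace_add subspace_scale) auto
    have "\<phi> y = \<phi> x + \<phi> (scale (- (\<phi> x / \<phi> v)) v)"
      unfolding y_def by (rule add[OF x]) (rule subspace_scale[OF K v(1)])
    also have "\<dots> = \<phi> x + (- (\<phi> x / \<phi> v)) * \<phi> v"
      by (simp only: hom[OF v(1)])
    finally have "\<phi> y = \<phi> x + (- (\<phi> x / \<phi> v)) * \<phi> v" .
    then have "\<phi> y = 0" using v by simp
    with yK have "y \<in> span B" using B(3) by auto
    then have "y \<in> span (insert v B)" using span_mono[of B "insert v B"] by auto
    moreover have "scale (\<phi> x / \<phi> v) v \<in> span (insert v B)"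
      by (intro span_scale span_base) auto
    ultimately have "y + scale (\<phi> x / \<phi> v) v \<in> span (insert v B)" by (rule span_add)
    moreover have "y + scale (\<phi> x / \<phi> v) v = x"
      unfolding y_def by (simp add: scale_left_distrib[symmetric])
    ultimately show "x \<in> span (insert v B)" by simp
  qed
  then have "dim K \<le> card (insert v B)" using finB by (intro dim_le_card) auto
  also have "\<dots> \<le> card B + 1" using finB by (simp add: card_insert_if)
  finally show ?thesis using B(4) by simp
qed

lemma dim_cut:
  assumes J: "finite J" and V: "subspace V" and VW: "V \<subseteq> span W" and W: "finite W"
    and add: "\<And>j x y. j\<in>J \<Longrightarrow> x\<in>V \<Longrightarrow> y\<in>V \<Longrightarrow> \<phi> j (x+y) = \<phi> j x + \<phi> j y"
    and hom: "\<And>j c x. j\<in>J \<Longrightarrow> x\<in>V \<Longrightarrow> \<phi> j (scale c x) = c * \<phi> j x"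
  shows "dim V \<le> dim {x\<in>V. \<forall>j\<in>J. \<phi> j x = 0} + card J"
  using J add hom
proof (induction J rule: finite_induct)
  case empty
  then show ?case by simp
next
  case (insert j J)
  let ?K = "{x\<in>V. \<forall>i\<in>J. \<phi> i x = 0}"
  have IH: "dim V \<le> dim ?K + card J" using insert by auto
  have sK: "subspace ?K" using V insert.prems by (intro subspace_ker) auto
  have "dim ?K \<le> dim {x\<in>?K. \<phi> j x = 0} + 1"
    by (rule dim_cut1[OF sK _ W]) (use VW insert.prems in auto)
  moreover have "{x\<in>?K. \<phi> j x = 0} = {x\<in>V. \<forall>i\<in>insert j J. \<phi> i x = 0}" by auto
  ultimately show ?case using IH insert.hyps by simp
qed

lemma dim_mono_fin:
  assumes "S \<subseteq> T" "T \<subseteq> span W" "finite W"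
  shows "dim S \<le> dim T"
proof -
  obtain B where B: "B \<subseteq> S" "independent B" "S \<subseteq> span B" "card B = dim S"
    by (rule basis_exists)
  obtain C where C: "B \<subseteq> C" "C \<subseteq> T" "independent C" "T \<subseteq> span C"
    using maximal_independent_subset_extend[of B T] B assms(1) by blast
  have "card C = dim T" by (rule basis_card_eq_dim[OF C(2) C(4) C(3)])
  have "finite C" using independent_span_bound[OF assms(3) C(3)] C(2) assms(2) by auto
  then have "card B \<le> card C" using C(1) by (rule card_mono)
  then show ?thesis using B(4) \<open>card C = dim T\<close> by simp
qed

lemma span_eq_of_card:
  assumes B: "independent B" "B \<subseteq> span W" and W: "finite W" and c: "card W \<le> card B"
  shows "span W \<subseteq> span B"
proof -
  obtain C where C: "B \<subseteq> C" "C \<subseteq> span W" "independent C" "span W \<subseteq> span C"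
    using maximal_independent_subset_extend[of B "span W"] B by blast
  have fC: "finite C" "card C \<le> card W" using independent_span_bound[OF W C(3) C(2)] by auto
  have "B = C" using card_seteq[OF fC(1) C(1)] fC(2) c by simp
  then show ?thesis using C(4) by simp
qed

lemma dim_zero_set: "dim {0} = 0"
proof -
  have "dim {0} = card ({}::'b set)"
    by (rule dim_eq_card) (auto simp: independent_empty)
  then show ?thesis by simp
qed

end



interpretation ps: vector_space "pscale :: real \<Rightarrow> ('n::finite) rpoly \<Rightarrow> 'n rpoly"
  by unfold_locales (simp_all add: pscale_def fun_eq_iff algebra_simps)

lemma Tc_sum: "Tc m k c = (\<Sum>x\<in>II m k. pscale (c x) (ee m x))"
  by (simp add: Tc_def fun_eq_iff fun_sum_apply pscale_def)

lemma Tc_add: "Tc m k c + Tc m k c' = Tc m k (\<lambda>x. c x + c' x)"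
  by (simp add: Tc_def fun_eq_iff sum.distrib distrib_right)

lemma Tc_scale: "pscale r (Tc m k c) = Tc m k (\<lambda>x. r * c x)"
  by (simp add: Tc_def fun_eq_iff pscale_def sum_distrib_left mult.assoc)

lemma JF_add: "JF m k (\<lambda>x. c x + c' x) b \<beta> = JF m k c b \<beta> + JF m k c' b \<beta>"
  by (simp add: JF_def sum.distrib distrib_right)

lemma JF_scale: "JF m k (\<lambda>x. r * c x) b \<beta> = r * JF m k c b \<beta>"
  by (simp add: JF_def sum_distrib_left mult.assoc)

lemma tri:
  fixes c :: "('n::finite \<Rightarrow> nat) \<times> ('n \<Rightarrow> nat) \<Rightarrow> real"
  assumes A: "\<And>q b. q \<in> Q (k-1) \<Longrightarrow> b \<in> G m \<Longrightarrow> b \<noteq> (\<lambda>_. 0) \<or> sum q UNIV \<le> k-2 \<Longrightarrow> JF m k c b q = 0"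
    and Bt: "\<And>q. q \<in> Q (k-1) \<Longrightarrow> sum q UNIV = k-1 \<Longrightarrow> (\<Sum>a\<in>G m. c (q,a)) = 0"
  shows "\<forall>x\<in>II m k. c x = 0"
proof -
  have main: "\<forall>q\<in>Q (k-1). sum q UNIV = d \<longrightarrow> (\<forall>b\<in>G m. c (q,b) = 0)" for d
  proof (induction d rule: less_induct)
    case (less d)
    show ?case
    proof (intro ballI impI)
      fix q b :: "'n \<Rightarrow> nat" assume q: "q \<in> Q (k-1)" and sd: "sum q UNIV = d" and b: "b \<in> G m"
      have IH: "c (q',a) = 0" if "q' \<in> Q (k-1)" "sum q' UNIV < sum q UNIV" "a \<in> G m" for q' a
        using less.IH that sd by blast
      have nz: "b' \<in> G m \<Longrightarrow> b' \<noteq> (\<lambda>_. 0) \<or> sum q UNIV \<le> k-2 \<Longrightarrow> c (q,b') = 0" for b'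
      proof -
        assume b': "b' \<in> G m" "b' \<noteq> (\<lambda>_. 0) \<or> sum q UNIV \<le> k-2"
        have "JF m k c b' q = 0" using A[OF q b'(1) b'(2)] .
        moreover have "JF m k c b' q = c (q,b') * (\<Prod>i\<in>UNIV. poly ((pderiv^^q i) (pp m (q i) (b' i))) (real (b' i)))"
          by (rule step[where q=q and b=b' and c=c and m=m and k=k, OF q b'(1) IH])
        ultimately show "c (q,b') = 0" using kappa_nz[OF b'(1), of q] by simp
      qed
      show "c (q,b) = 0"
      proof (cases "b \<noteq> (\<lambda>_. 0) \<or> sum q UNIV \<le> k-2")
        case True
        then show ?thesis using nz b by auto
      next
        case False
        then have b0: "b = (\<lambda>_. 0)" and sq: "sum q UNIV = k-1" using q unfolding Q_def by auto
        have "0 = (\<Sum>a\<in>G m. c (q,a))" using Bt[OF q sq] by simp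
        also have "\<dots> = c (q,b) + (\<Sum>a\<in>G m - {b}. c (q,a))"
          by (rule sum.remove[OF finite_G b])
        also have "(\<Sum>a\<in>G m - {b}. c (q,a)) = 0"
          using nz b0 by (intro sum.neutral) auto
        finally show ?thesis by simp
      qed
    qed
  qed
  show ?thesis unfolding II_def using main by blast
qed

definition lst :: "('n::finite \<Rightarrow> nat) \<Rightarrow> 'n list" where
  "lst \<beta> = (SOME xs. \<forall>i. count_list xs i = \<beta> i)"

lemma ex_lst_aux: "finite A \<Longrightarrow> \<exists>xs. \<forall>i. count_list xs i = (if i \<in> A then \<beta> i else 0)"
proof (induction A rule: finite_induct)
  case empty
  then show ?case by (intro exI[of _ "[]"]) auto
next
  case (insert x A)
  then obtain xs where xs: "\<forall>i. count_list xs i = (if i \<in> A then \<beta> i else 0)" by auto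
  have "count_list (replicate n x) i = (if i = x then n else 0)" for i n
    by (induction n) auto
  then show ?case using xs insert.hyps
    by (intro exI[of _ "replicate (\<beta> x) x @ xs"]) auto
qed

lemma lst_count: "count_list (lst \<beta>) i = \<beta> i"
proof -
  have "\<exists>xs. \<forall>i. count_list xs i = \<beta> i" using ex_lst_aux[of UNIV \<beta>] by simp
  then have "\<forall>i. count_list (lst \<beta>) i = \<beta> i" unfolding lst_def by (rule someI_ex)
  then show ?thesis by simp
qed

lemma length_count: "length (xs :: 'n::finite list) = sum (count_list xs) UNIV"
  using sum_count_set[of xs UNIV] by simp

lemma length_lst: "length (lst \<beta>) = sum \<beta> UNIV"
  unfolding length_count lst_count by (simp add: lst_count[abs_def])

lemma peval_zero: "peval (\<lambda>_. 0) a = 0" by (simp add: peval_def)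

lemma pdiffs_zero: "pdiffs is (\<lambda>_. 0) = (\<lambda>_. 0)"
  by (induction "is") (simp_all add: pdiffs_def pdiff_def)

lemma JF_lst: "JF m k c b \<beta> = peval (pdiffs (lst \<beta>) (Tc m k c)) (\<lambda>i. real (b i))"
  by (simp add: jet_formula lst_count[abs_def])

lemma Tc_indep:
  assumes "Tc m k c = (\<lambda>_. 0)" "m \<ge> 1"
  shows "\<forall>x\<in>II m k. c x = 0"
proof (rule tri)
  fix q b
  show "JF m k c b q = 0" unfolding JF_lst assms(1) pdiffs_zero peval_zero ..
next
  fix q :: "'a \<Rightarrow> nat" assume "q \<in> Q (k-1)" "sum q UNIV = k-1"
  then have "Tc m k c (\<lambda>i. (m+1) * q i + m) = (\<Sum>a\<in>G m. c (q,a))" by (rule top)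
  then show "(\<Sum>a\<in>G m. c (q,a)) = 0" using assms by simp
qed



definition RR :: "nat \<Rightarrow> nat \<Rightarrow> ('n::finite \<Rightarrow> nat) set" where
  "RR m k = {\<alpha>. (\<Sum>i\<in>UNIV. \<alpha> i div (m+1)) \<le> k-1}"

definition dlt :: "('n::finite \<Rightarrow> nat) \<Rightarrow> 'n rpoly" where
  "dlt \<alpha> = (\<lambda>\<beta>. if \<beta> = \<alpha> then 1 else 0)"

lemma div_bound: "(a::nat) \<le> (m+1) * q + m \<Longrightarrow> a div (m+1) \<le> q"
proof -
  assume "a \<le> (m+1) * q + m"
  then have "a < (q+1) * (m+1)" by (simp add: algebra_simps)
  then have "a div (m+1) < q + 1" by (rule less_mult_imp_div_less)
  then show ?thesis by simp
qed

lemma RR_box: "RR m k \<subseteq> box (\<lambda>_. (m+1) * k + m)"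
proof
  fix \<alpha> :: "'a \<Rightarrow> nat" assume "\<alpha> \<in> RR m k"
  then have s: "(\<Sum>i\<in>UNIV. \<alpha> i div (m+1)) \<le> k-1" by (simp add: RR_def)
  show "\<alpha> \<in> box (\<lambda>_. (m+1) * k + m)" unfolding box_def
  proof (intro CollectI allI)
    fix i
    have "\<alpha> i div (m+1) \<le> k - 1" using le_sumq[of "\<lambda>i. \<alpha> i div (m+1)" i] s by simp
    then have "\<alpha> i div (m+1) \<le> k" by simp
    then have "(m+1) * (\<alpha> i div (m+1)) \<le> (m+1) * k" by (rule mult_le_mono2)
    moreover have "\<alpha> i = (m+1) * (\<alpha> i div (m+1)) + \<alpha> i mod (m+1)" by (rule mult_div_mod_eq[symmetric])
    moreover have "\<alpha> i mod (m+1) \<le> m" by (metis Suc_eq_plus1 less_Suc_eq_le mod_less_divisor zero_less_Suc)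
    ultimately show "\<alpha> i \<le> (m+1) * k + m" by linarith
  qed
qed

lemma finite_RR: "finite (RR m k)"
  using RR_box finite_box finite_subset by blast

lemma card_RR_le: "card (RR m k :: ('n::finite \<Rightarrow> nat) set) \<le> card (II m k :: (('n \<Rightarrow> nat) \<times> ('n \<Rightarrow> nat)) set)"
proof (rule card_inj_on_le[OF _ _ finite_II])
  let ?f = "\<lambda>\<alpha>::'n \<Rightarrow> nat. (\<lambda>i. \<alpha> i div (m+1), \<lambda>i. \<alpha> i mod (m+1))"
  show "inj_on ?f (RR m k)"
  proof (rule inj_onI)
    fix \<alpha> \<beta> :: "'n \<Rightarrow> nat" assume "?f \<alpha> = ?f \<beta>"
    then have "\<alpha> i div (m+1) = \<beta> i div (m+1)" "\<alpha> i mod (m+1) = \<beta> i mod (m+1)" for i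
      by (auto simp: fun_eq_iff)
    then show "\<alpha> = \<beta>" by (metis div_mult_mod_eq ext)
  qed
  show "?f ` RR m k \<subseteq> II m k"
  proof
    fix x assume "x \<in> ?f ` RR m k"
    then obtain \<alpha> where "\<alpha> \<in> RR m k" "x = ?f \<alpha>" by auto
    moreover have "\<alpha> i mod (m+1) \<le> m" for i by (metis Suc_eq_plus1 less_Suc_eq_le mod_less_divisor zero_less_Suc)
    ultimately show "x \<in> II m k" by (auto simp: II_def Q_def RR_def G_def box_def)
  qed
qed

lemma in_span_dlt:
  assumes "{\<alpha>. P \<alpha> \<noteq> 0} \<subseteq> RR m k"
  shows "P \<in> ps.span (dlt ` RR m k)"
proof -
  have "P = (\<Sum>\<alpha>\<in>RR m k. pscale (P \<alpha>) (dlt \<alpha>))"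
  proof
    fix \<beta>
    have "(\<Sum>\<alpha>\<in>RR m k. pscale (P \<alpha>) (dlt \<alpha>)) \<beta> = (\<Sum>\<alpha>\<in>RR m k. if \<beta> = \<alpha> then P \<alpha> else 0)"
      by (simp add: fun_sum_apply pscale_def dlt_def if_distrib cong: if_cong)
    also have "\<dots> = (if \<beta> \<in> RR m k then P \<beta> else 0)"
      by (simp add: sum.delta'[OF finite_RR])
    also have "\<dots> = P \<beta>" using assms by auto
    finally show "P \<beta> = (\<Sum>\<alpha>\<in>RR m k. pscale (P \<alpha>) (dlt \<alpha>)) \<beta>" by simp
  qed
  also have "\<dots> \<in> ps.span (dlt ` RR m k)"
    by (intro ps.span_sum ps.span_scale ps.span_base) auto
  finally show ?thesis .
qed

lemma ee_supp:
  assumes "x \<in> II m k" "ee m x \<alpha> \<noteq> 0"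
  shows "\<alpha> \<in> RR m k"
proof -
  obtain q a where x: "x = (q,a)" "q \<in> Q (k-1)" "a \<in> G m" using assms(1) unfolding II_def by auto
  have "\<alpha> i div (m+1) \<le> q i" for i
  proof -
    have "a i \<le> m" using x(3) by (simp add: G_def box_def)
    then have "\<alpha> i \<le> (m+1) * q i + m"
      using tens_supp[of _ \<alpha> i] assms(2) unfolding x ee_def by (metis degree_pp fst_conv snd_conv)
    then show ?thesis by (rule div_bound)
  qed
  then have "(\<Sum>i\<in>UNIV. \<alpha> i div (m+1)) \<le> sum q UNIV" by (intro sum_mono) auto
  then show ?thesis using x(2) by (simp add: RR_def Q_def)
qed

lemma Tc_supp: "Tc m k c \<alpha> \<noteq> 0 \<Longrightarrow> \<alpha> \<in> RR m k"
proof -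
  assume "Tc m k c \<alpha> \<noteq> 0"
  then obtain x where "x \<in> II m k" "c x * ee m x \<alpha> \<noteq> 0"
    unfolding Tc_def by (auto elim: sum.not_neutral_contains_not_neutral)
  then show ?thesis using ee_supp[of x m k \<alpha>] by simp
qed

lemma inj_ee: assumes "m \<ge> 1" shows "inj_on (ee m) (II m k)"
proof (rule inj_onI, rule ccontr)
  fix x y assume x: "x \<in> II m k" and y: "y \<in> II m k" and e: "ee m x = ee m y" and xy: "x \<noteq> y"
  define c where "c z = (if z = x then 1 else if z = y then -1 else (0::real))" for z
  have "Tc m k c \<alpha> = 0" for \<alpha>
  proof -
    have "Tc m k c \<alpha> = c x * ee m x \<alpha> + (\<Sum>z\<in>II m k - {x}. c z * ee m z \<alpha>)"
      unfolding Tc_def by (rule sum.remove[OF finite_II x])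
    also have "(\<Sum>z\<in>II m k - {x}. c z * ee m z \<alpha>) = c y * ee m y \<alpha> + (\<Sum>z\<in>II m k - {x} - {y}. c z * ee m z \<alpha>)"
      by (rule sum.remove) (use finite_II y xy in auto)
    also have "(\<Sum>z\<in>II m k - {x} - {y}. c z * ee m z \<alpha>) = 0"
      by (rule sum.neutral) (auto simp: c_def)
    moreover have "c x = 1" "c y = -1" using xy by (auto simp: c_def)
    ultimately show ?thesis using e by simp
  qed
  then have "Tc m k c = (\<lambda>_. 0)" by auto
  then have "\<forall>z\<in>II m k. c z = 0" using Tc_indep assms by blast
  then have "c x = 0" using x by blast
  then show False by (simp add: c_def)
qed

type_synonym 'n idx = "('n \<Rightarrow> nat) \<times> ('n \<Rightarrow> nat)"

lemma Tc_reindex: assumes "m \<ge> 1"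
  shows "(\<Sum>v\<in>ee m ` (II m k :: 'n::finite idx set). pscale (u v) v) = Tc m k (\<lambda>z. u (ee m z))"
  unfolding Tc_sum by (simp add: sum.reindex[OF inj_ee[OF assms]])

lemma indep_ee: assumes "m \<ge> 1" shows "ps.independent (ee m ` (II m k :: 'n::finite idx set))"
proof (rule ps.independent_if_scalars_zero)
  show "finite (ee m ` (II m k :: 'n::finite idx set))" by (rule finite_imageI[OF finite_II])
next
  fix f :: "'n rpoly \<Rightarrow> real" and v :: "'n rpoly"
  assume s: "(\<Sum>v\<in>ee m ` (II m k :: 'n::finite idx set). pscale (f v) v) = 0" and v: "v \<in> ee m ` (II m k :: 'n::finite idx set)"
  have "Tc m k (\<lambda>z. f (ee m z)) = (\<Sum>v\<in>ee m ` (II m k :: 'n::finite idx set). pscale (f v) v)"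
    by (rule Tc_reindex[OF assms, symmetric])
  then have "Tc m k (\<lambda>z. f (ee m z)) = (\<lambda>_. 0)" using s by (simp add: zero_fun_def)
  then have "\<forall>z\<in>II m k. f (ee m z) = 0" using Tc_indep assms by blast
  then show "f v = 0" using v by auto
qed

lemma span_ee: assumes "m \<ge> 1" shows "ps.span (ee m ` (II m k :: 'n::finite idx set)) = range (Tc m k)"
proof -
  have "ps.span (ee m ` (II m k :: 'n::finite idx set)) = range (\<lambda>u. \<Sum>v\<in>ee m ` (II m k :: 'n::finite idx set). pscale (u v) v)"
    by (rule ps.span_finite) (rule finite_imageI[OF finite_II])
  also have "\<dots> \<subseteq> range (Tc m k)" using Tc_reindex[OF assms] by auto
  finally have 1: "ps.span (ee m ` (II m k :: 'n::finite idx set)) \<subseteq> range (Tc m k)" .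
  have "Tc m k c \<in> ps.span (ee m ` (II m k :: 'n::finite idx set))" for c
    unfolding Tc_sum by (intro ps.span_sum ps.span_scale ps.span_base) auto
  then show ?thesis using 1 by auto
qed

lemma card_ee: assumes "m \<ge> 1"
  shows "card (ee m ` (II m k :: 'n::finite idx set)) = card (II m k :: 'n idx set)"
  by (rule card_image[OF inj_ee[OF assms]])

lemma in_range_Tc:
  fixes P :: "'n::finite rpoly"
  assumes "m \<ge> 1" "{\<alpha>. P \<alpha> \<noteq> 0} \<subseteq> RR m k"
  shows "P \<in> range (Tc m k)"
proof -
  have "ps.span (dlt ` RR m k) \<subseteq> ps.span (ee m ` (II m k :: 'n::finite idx set))"
  proof (rule ps.span_eq_of_card[OF indep_ee[OF assms(1)]])
    show "ee m ` (II m k :: 'n::finite idx set) \<subseteq> ps.span (dlt ` RR m k)"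
    proof
      fix v assume "v \<in> ee m ` (II m k :: 'n::finite idx set)"
      then obtain x where x: "x \<in> II m k" "v = ee m x" by auto
      have "{\<alpha>. ee m x \<alpha> \<noteq> 0} \<subseteq> RR m k" using ee_supp[OF x(1)] by auto
      then show "v \<in> ps.span (dlt ` RR m k)" using x(2) in_span_dlt by simp
    qed
    show "finite (dlt ` (RR m k :: ('n \<Rightarrow> nat) set))" by (rule finite_imageI[OF finite_RR])
    have "card (dlt ` (RR m k :: ('n \<Rightarrow> nat) set)) \<le> card (RR m k :: ('n \<Rightarrow> nat) set)"
      using finite_RR card_image_le by blast
    also have "\<dots> \<le> card (II m k :: 'n idx set)" by (rule card_RR_le)
    also have "\<dots> = card (ee m ` (II m k :: 'n::finite idx set))" by (rule card_ee[OF assms(1), symmetric])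
    finally show "card (dlt ` (RR m k :: ('n \<Rightarrow> nat) set)) \<le> card (ee m ` (II m k :: 'n::finite idx set))" .
  qed
  then show ?thesis using in_span_dlt[OF assms(2)] span_ee[OF assms(1)] by auto
qed



lemma mod_le_m: "(a::nat) mod (m+1) \<le> m"
  by (metis Suc_eq_plus1 less_Suc_eq_le mod_less_divisor zero_less_Suc)

lemma mdeg_split:
  fixes \<alpha> :: "'n::finite \<Rightarrow> nat"
  shows "mdeg \<alpha> = (m+1) * (\<Sum>i\<in>UNIV. \<alpha> i div (m+1)) + (\<Sum>i\<in>UNIV. \<alpha> i mod (m+1))"
proof -
  have "mdeg \<alpha> = (\<Sum>i\<in>UNIV. (m+1) * (\<alpha> i div (m+1)) + \<alpha> i mod (m+1))"
    unfolding mdeg_def by (rule sum.cong) (simp_all only: mult_div_mod_eq)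
  also have "\<dots> = (m+1) * (\<Sum>i\<in>UNIV. \<alpha> i div (m+1)) + (\<Sum>i\<in>UNIV. \<alpha> i mod (m+1))"
    by (simp add: sum.distrib sum_distrib_left)
  finally show ?thesis .
qed

lemma sum_mod_le:
  "(\<Sum>i\<in>(UNIV::'n::finite set). \<alpha> i mod (m+1)) \<le> m * CARD('n)"
proof -
  have "(\<Sum>i\<in>(UNIV::'n set). \<alpha> i mod (m+1)) \<le> (\<Sum>i\<in>(UNIV::'n set). m)"
    by (rule sum_mono) (rule mod_le_m)
  then show ?thesis by (simp add: mult.commute)
qed

lemma RR_deg:
  fixes \<alpha> :: "'n::finite \<Rightarrow> nat"
  assumes "\<alpha> \<in> RR m k"
  shows "mdeg \<alpha> \<le> (m+1) * (k-1) + m * CARD('n)"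
proof -
  have "(m+1) * (\<Sum>i\<in>UNIV. \<alpha> i div (m+1)) \<le> (m+1) * (k-1)"
    using assms by (intro mult_le_mono2) (simp add: RR_def)
  then show ?thesis unfolding mdeg_split[of \<alpha> m] using sum_mod_le[of \<alpha> m] by linarith
qed

lemma RR_top:
  fixes \<alpha> :: "'n::finite \<Rightarrow> nat"
  assumes "\<alpha> \<in> RR m k" "mdeg \<alpha> \<ge> (m+1) * (k-1) + m * CARD('n)"
  shows "sum (\<lambda>i. \<alpha> i div (m+1)) UNIV = k-1 \<and> \<alpha> = (\<lambda>i. (m+1) * (\<alpha> i div (m+1)) + m)"
proof -
  let ?S = "\<Sum>i\<in>UNIV. \<alpha> i div (m+1)" and ?R = "\<Sum>i\<in>UNIV. \<alpha> i mod (m+1)"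
  have s: "?S \<le> k-1" using assms(1) by (simp add: RR_def)
  have 1: "(m+1) * ?S \<le> (m+1) * (k-1)" using s by (rule mult_le_mono2)
  have 2: "?R \<le> m * CARD('n)" by (rule sum_mod_le)
  have 3: "(m+1) * ?S + ?R \<ge> (m+1) * (k-1) + m * CARD('n)" using assms(2) mdeg_split[of \<alpha> m] by simp
  have R: "?R = m * CARD('n)" using 1 2 3 by linarith
  have "(m+1) * ?S = (m+1) * (k-1)" using 1 2 3 by linarith
  then have S: "?S = k-1" using nat_mult_eq_cancel1[of "m+1" ?S "k-1"] by simp
  have "\<alpha> i mod (m+1) = m" for i
  proof (rule ccontr)
    assume "\<alpha> i mod (m+1) \<noteq> m"
    moreover have "\<alpha> i mod (m+1) \<le> m" by (rule mod_le_m)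
    ultimately have "\<alpha> i mod (m+1) < m" by linarith
    then have "?R < (\<Sum>i\<in>(UNIV::'n set). m)"
      by (intro sum_strict_mono_ex1) (auto intro: mod_le_m)
    then show False using R by simp
  qed
  then have "\<alpha> = (\<lambda>i. (m+1) * (\<alpha> i div (m+1)) + m)"
    by (metis mult_div_mod_eq ext)
  then show ?thesis using S by simp
qed

lemma mdeg_top:
  fixes q :: "'n::finite \<Rightarrow> nat"
  shows "mdeg (\<lambda>i. (m+1) * q i + m) = (m+1) * sum q UNIV + m * CARD('n)"
  unfolding mdeg_def by (simp add: sum.distrib sum_distrib_left)

lemma count_le_div:
  fixes "is" :: "'n::finite list"
  assumes "\<forall>i. (m+1) * count_list is i \<le> \<alpha> i"
  shows "length is \<le> (\<Sum>i\<in>UNIV. \<alpha> i div (m+1))"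
proof -
  have "count_list is i \<le> \<alpha> i div (m+1)" for i
  proof -
    have "count_list is i = ((m+1) * count_list is i) div (m+1)" by (rule div_mult_self1_is_m[symmetric]) simp
    also have "\<dots> \<le> \<alpha> i div (m+1)" using assms by (intro div_le_mono) auto
    finally show ?thesis .
  qed
  then have "sum (count_list is) UNIV \<le> (\<Sum>i\<in>UNIV. \<alpha> i div (m+1))" by (intro sum_mono) auto
  then show ?thesis using length_count[of "is"] by simp
qed

lemma RR_list:
  fixes \<alpha> :: "'n::finite \<Rightarrow> nat"
  assumes "\<alpha> \<in> RR m k" "k \<ge> 1"
  shows "\<not> (\<exists>is::'n list. length is = k \<and> (\<forall>i. (m+1) * count_list is i \<le> \<alpha> i))"
proof
  assume "\<exists>is::'n list. length is = k \<and> (\<forall>i. (m+1) * count_list is i \<le> \<alpha> i)"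
  then obtain "is" :: "'n list" where "length is = k" "\<forall>i. (m+1) * count_list is i \<le> \<alpha> i" by blast
  then have "k \<le> (\<Sum>i\<in>UNIV. \<alpha> i div (m+1))" using count_le_div by metis
  then show False using assms by (simp add: RR_def)
qed

lemma count_take_le: "count_list (take k xs) i \<le> count_list xs i"
proof -
  have "count_list xs i = count_list (take k xs @ drop k xs) i" by simp
  also have "\<dots> = count_list (take k xs) i + count_list (drop k xs) i" by (rule count_list_append)
  finally show ?thesis by simp
qed

lemma notRR_list:
  fixes \<alpha> :: "'n::finite \<Rightarrow> nat"
  assumes "\<alpha> \<notin> RR m k"
  shows "\<exists>is::'n list. length is = k \<and> (\<forall>i. (m+1) * count_list is i \<le> \<alpha> i)"
proof -
  let ?xs = "lst (\<lambda>i. \<alpha> i div (m+1))"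
  have len: "length ?xs \<ge> k" using assms unfolding length_lst RR_def by simp
  have "(m+1) * count_list (take k ?xs) i \<le> \<alpha> i" for i
  proof -
    have "count_list (take k ?xs) i \<le> \<alpha> i div (m+1)" using count_take_le[of k ?xs i] lst_count by metis
    then have "(m+1) * count_list (take k ?xs) i \<le> (m+1) * (\<alpha> i div (m+1))" by (rule mult_le_mono2)
    also have "\<dots> \<le> \<alpha> i" by (rule times_div_less_eq_dividend)
    finally show ?thesis .
  qed
  moreover have "length (take k ?xs) = k" using len by simp
  ultimately show ?thesis by blast
qed



definition phi :: "nat \<Rightarrow> ('n::finite idx + ('n \<Rightarrow> nat)) \<Rightarrow> 'n rpoly \<Rightarrow> real" where
  "phi m j P = (case j of Inl (b,\<beta>) \<Rightarrow> peval (pdiffs (lst \<beta>) P) (\<lambda>i. real (b i))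
                        | Inr q \<Rightarrow> P (\<lambda>i. (m+1) * q i + m))"

definition J1 :: "nat \<Rightarrow> nat \<Rightarrow> ('n::finite idx + ('n \<Rightarrow> nat)) set" where
  "J1 m k = Inl ` ((G m - {\<lambda>_. 0}) \<times> Q (k-1)) \<union> Inr ` (Q (k-1) - Q (k-2))"

definition J2 :: "nat \<Rightarrow> ('n::finite idx + ('n \<Rightarrow> nat)) set" where
  "J2 k = Inl ` ({\<lambda>_. 0} \<times> Q (k-2))"

lemma phi_Inl_Tc: "phi m (Inl (b,\<beta>)) (Tc m k c) = JF m k c b \<beta>"
  by (simp add: phi_def JF_lst)

lemma phi_Inr: "phi m (Inr q) P = P (\<lambda>i. (m+1) * q i + m)"
  by (simp add: phi_def)

lemma phi_add:
  assumes "P \<in> range (Tc m k)" "P' \<in> range (Tc m k)"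
  shows "phi m j (P + P') = phi m j P + phi m j P'"
proof -
  obtain c c' where P: "P = Tc m k c" "P' = Tc m k c'" using assms by auto
  show ?thesis
  proof (cases j)
    case (Inl x)
    then obtain b \<beta> where j: "j = Inl (b,\<beta>)" by (cases x) auto
    show ?thesis unfolding j P Tc_add phi_Inl_Tc JF_add ..
  next
    case (Inr q)
    then show ?thesis by (simp add: phi_def)
  qed
qed

lemma phi_scale:
  assumes "P \<in> range (Tc m k)"
  shows "phi m j (pscale r P) = r * phi m j P"
proof -
  obtain c where P: "P = Tc m k c" using assms by auto
  show ?thesis
  proof (cases j)
    case (Inl x)
    then obtain b \<beta> where j: "j = Inl (b,\<beta>)" by (cases x) auto
    show ?thesis unfolding j P Tc_scale phi_Inl_Tc JF_scale ..
  next
    case (Inr q)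
    then show ?thesis by (simp add: phi_def pscale_def)
  qed
qed

lemma card_pos: "CARD('n::finite) \<ge> 1"
  using finite_UNIV_card_ge_0[where 'a='n] by simp

lemma U_char:
  assumes m: "m \<ge> 1" and k: "k \<ge> 2"
  shows "(U m k :: 'n::finite rpoly set) = {P \<in> range (Tc m k). \<forall>j\<in>J1 m k. phi m j P = 0}"
proof
  show "(U m k :: 'n rpoly set) \<subseteq> {P \<in> range (Tc m k). \<forall>j\<in>J1 m k. phi m j P = 0}"
  proof
    fix P :: "'n rpoly" assume P: "P \<in> U m k"
    then have red: "reduced m k P" and zm: "\<And>a. (\<forall>i. a i \<le> m) \<and> a \<noteq> (\<lambda>_. 0) \<Longrightarrow> zero_mult_ge P k (\<lambda>i. real (a i))"
      unfolding U_def by auto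
    have supp: "{\<alpha>. P \<alpha> \<noteq> 0} \<subseteq> RR m k"
    proof
      fix \<alpha> assume "\<alpha> \<in> {\<alpha>. P \<alpha> \<noteq> 0}"
      then show "\<alpha> \<in> RR m k" using red notRR_list[of \<alpha> m k] unfolding reduced_def by blast
    qed
    have inr: "P \<in> range (Tc m k)" by (rule in_range_Tc[OF m supp])
    have "phi m j P = 0" if j: "j \<in> J1 m k" for j
    proof -
      consider (a) b \<beta> where "j = Inl (b,\<beta>)" "b \<in> G m" "b \<noteq> (\<lambda>_. 0)" "\<beta> \<in> Q (k-1)"
        | (b) q where "j = Inr q" "q \<in> Q (k-1)" "q \<notin> Q (k-2)"
        using j unfolding J1_def by auto
      then show ?thesis
      proof cases
        case a
        have "(\<forall>i. b i \<le> m) \<and> b \<noteq> (\<lambda>_. 0)" using a by (simp add: G_def box_def)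
        then have "zero_mult_ge P k (\<lambda>i. real (b i))" by (rule zm)
        moreover have "length (lst \<beta>) < k" using a(4) k unfolding length_lst Q_def by simp
        ultimately show ?thesis unfolding a(1) phi_def zero_mult_ge_def by simp
      next
        case b
        have sq: "sum q UNIV = k-1" using b unfolding Q_def by simp
        show ?thesis
        proof (rule ccontr)
          assume "phi m j P \<noteq> 0"
          then have "P (\<lambda>i. (m+1) * q i + m) \<noteq> 0" using b by (simp add: phi_Inr)
          then have "mdeg (\<lambda>i. (m+1) * q i + m) \<le> m * CARD('n) + (m + 1) * (k - 1) - 1"
            using red unfolding reduced_def deg_le_def by blast
          moreover have "m * CARD('n) \<ge> 1" using m card_pos[where 'n='n] by (metis le_trans mult_le_mono nat_mult_1)
          ultimately show False unfolding mdeg_top sq by linarith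
        qed
      qed
    qed
    then show "P \<in> {P \<in> range (Tc m k). \<forall>j\<in>J1 m k. phi m j P = 0}" using inr by auto
  qed
next
  show "{P \<in> range (Tc m k). \<forall>j\<in>J1 m k. phi m j P = 0} \<subseteq> (U m k :: 'n rpoly set)"
  proof
    fix P :: "'n rpoly" assume "P \<in> {P \<in> range (Tc m k). \<forall>j\<in>J1 m k. phi m j P = 0}"
    then obtain c where P: "P = Tc m k c" and ph: "\<And>j. j \<in> J1 m k \<Longrightarrow> phi m j P = 0" by auto
    have supp: "P \<alpha> \<noteq> 0 \<Longrightarrow> \<alpha> \<in> RR m k" for \<alpha> unfolding P by (rule Tc_supp)
    have isp: "is_poly P" unfolding is_poly_def
      using finite_RR supp by (metis (mono_tags) finite_subset mem_Collect_eq subsetI)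
    have deg: "deg_le P (m * CARD('n) + (m + 1) * (k - 1) - 1)"
      unfolding deg_le_def
    proof (intro allI impI)
      fix \<alpha> assume nz: "P \<alpha> \<noteq> 0"
      have R: "\<alpha> \<in> RR m k" using supp nz .
      show "mdeg \<alpha> \<le> m * CARD('n) + (m + 1) * (k - 1) - 1"
      proof (rule ccontr)
        assume "\<not> ?thesis"
        then have "mdeg \<alpha> \<ge> (m+1) * (k-1) + m * CARD('n)" by simp
        from RR_top[OF R this] have t: "sum (\<lambda>i. \<alpha> i div (m+1)) UNIV = k-1"
          "\<alpha> = (\<lambda>i. (m+1) * (\<alpha> i div (m+1)) + m)" by auto
        let ?q = "\<lambda>i. \<alpha> i div (m+1)"
        have "Inr ?q \<in> J1 m k" unfolding J1_def Q_def using t(1) k by auto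
        then have "phi m (Inr ?q) P = 0" by (rule ph)
        then have "P \<alpha> = 0" unfolding phi_Inr using t(2) by metis
        then show False using nz by simp
      qed
    qed
    have lists: "\<forall>\<alpha>. P \<alpha> \<noteq> 0 \<longrightarrow>
        \<not> (\<exists>is::'n list. length is = k \<and> (\<forall>i. (m + 1) * count_list is i \<le> \<alpha> i))"
    proof (intro allI impI)
      fix \<alpha> assume "P \<alpha> \<noteq> 0"
      then have "\<alpha> \<in> RR m k" by (rule supp)
      then show "\<not> (\<exists>is::'n list. length is = k \<and> (\<forall>i. (m + 1) * count_list is i \<le> \<alpha> i))"
        by (rule RR_list) (use k in simp)
    qed
    have zm: "zero_mult_ge P k (\<lambda>i. real (a i))" if a: "(\<forall>i. a i \<le> m) \<and> a \<noteq> (\<lambda>_. 0)" for a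
      unfolding zero_mult_ge_def
    proof (intro allI impI)
      fix "is" :: "'n list" assume len: "length is < k"
      let ?\<beta> = "count_list is"
      have "?\<beta> \<in> Q (k-1)" using len length_count[of "is"] unfolding Q_def by simp
      moreover have "a \<in> G m - {\<lambda>_. 0}" using a by (simp add: G_def box_def)
      ultimately have "Inl (a, ?\<beta>) \<in> J1 m k" unfolding J1_def by auto
      then have "phi m (Inl (a, ?\<beta>)) P = 0" by (rule ph)
      then have "JF m k c a ?\<beta> = 0" unfolding P phi_Inl_Tc .
      then show "peval (pdiffs is P) (\<lambda>i. real (a i)) = 0" unfolding P jet_formula .
    qed
    show "P \<in> U m k" unfolding U_def reduced_def using isp deg lists zm by auto
  qed
qed



lemma finite_J1: "finite (J1 m k :: ('n::finite idx + ('n \<Rightarrow> nat)) set)"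
  unfolding J1_def using finite_G finite_Q by auto

lemma finite_J2: "finite (J2 k :: ('n::finite idx + ('n \<Rightarrow> nat)) set)"
  unfolding J2_def using finite_Q by auto

lemma zero_G: "(\<lambda>_. 0) \<in> G m" by (simp add: G_def box_def)

lemma Q_mono: "d \<le> d' \<Longrightarrow> Q d \<subseteq> Q d'" by (auto simp: Q_def)

lemma card_J1:
  "card (J1 m k :: ('n::finite idx + ('n \<Rightarrow> nat)) set)
   = (card (G m :: ('n \<Rightarrow> nat) set) - 1) * card (Q (k-1) :: ('n \<Rightarrow> nat) set)
     + (card (Q (k-1) :: ('n \<Rightarrow> nat) set) - card (Q (k-2) :: ('n \<Rightarrow> nat) set))"
proof -
  let ?A = "(G m - {\<lambda>_. 0}) \<times> Q (k-1) :: 'n idx set"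
  let ?B = "Q (k-1) - Q (k-2) :: ('n \<Rightarrow> nat) set"
  have "card (J1 m k :: ('n idx + ('n \<Rightarrow> nat)) set) = card (Inl ` ?A :: ('n idx + ('n \<Rightarrow> nat)) set) + card (Inr ` ?B :: ('n idx + ('n \<Rightarrow> nat)) set)"
    unfolding J1_def by (rule card_Un_disjoint) (use finite_G finite_Q in auto)
  also have "card (Inl ` ?A :: ('n idx + ('n \<Rightarrow> nat)) set) = card ?A" by (rule card_image) simp
  also have "card (Inr ` ?B :: ('n idx + ('n \<Rightarrow> nat)) set) = card ?B" by (rule card_image) simp
  also have "card ?A = (card (G m :: ('n \<Rightarrow> nat) set) - 1) * card (Q (k-1) :: ('n \<Rightarrow> nat) set)"
  proof -
    have "card (G m - {\<lambda>_. 0} :: ('n \<Rightarrow> nat) set) = card (G m :: ('n \<Rightarrow> nat) set) - 1"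
      by (rule card_Diff_singleton) (rule zero_G)
    then show ?thesis by (simp add: card_cartesian_product)
  qed
  also have "card ?B = card (Q (k-1) :: ('n \<Rightarrow> nat) set) - card (Q (k-2) :: ('n \<Rightarrow> nat) set)"
    by (rule card_Diff_subset) (simp_all add: finite_Q Q_mono)
  finally show ?thesis .
qed

lemma card_J2: "card (J2 k :: ('n::finite idx + ('n \<Rightarrow> nat)) set) = card (Q (k-2) :: ('n \<Rightarrow> nat) set)"
proof -
  have "card (J2 k :: ('n::finite idx + ('n \<Rightarrow> nat)) set) = card ({\<lambda>_. 0} \<times> Q (k-2) :: 'n idx set)"
    unfolding J2_def by (rule card_image) simp
  also have "\<dots> = card (Q (k-2) :: ('n \<Rightarrow> nat) set)" by (simp add: card_cartesian_product)
  finally show ?thesis .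
qed

lemma lower:
  assumes m: "m \<ge> 1" and k: "k \<ge> 2"
  shows "card (Q (k-2) :: ('n::finite \<Rightarrow> nat) set) \<le> ps.dim (U m k :: 'n rpoly set)"
proof -
  let ?V = "range (Tc m k) :: 'n rpoly set"
  let ?W = "ee m ` (II m k :: 'n idx set)"
  have VW: "?V = ps.span ?W" by (rule span_ee[OF m, symmetric])
  have "ps.dim ?V \<le> ps.dim {P\<in>?V. \<forall>j\<in>J1 m k. phi m j P = 0} + card (J1 m k :: ('n idx + ('n \<Rightarrow> nat)) set)"
  proof (rule ps.dim_cut[OF finite_J1 _ _ finite_imageI[OF finite_II]])
    show "ps.subspace ?V" unfolding VW by (rule ps.subspace_span)
    show "?V \<subseteq> ps.span ?W" unfolding VW ..
    show "phi m j (x + y) = phi m j x + phi m j y" if "x \<in> ?V" "y \<in> ?V" for j x y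
      by (rule phi_add) (use that in auto)
    show "phi m j (pscale c x) = c * phi m j x" if "x \<in> ?V" for j c x
      by (rule phi_scale) (use that in auto)
  qed
  also have "{P\<in>?V. \<forall>j\<in>J1 m k. phi m j P = 0} = U m k" by (rule U_char[OF m k, symmetric])
  finally have 1: "ps.dim ?V \<le> ps.dim (U m k :: 'n rpoly set) + card (J1 m k :: ('n idx + ('n \<Rightarrow> nat)) set)" .
  have "ps.dim ?V = card ?W" unfolding VW ps.dim_span by (rule ps.dim_eq_card_independent[OF indep_ee[OF m]])
  also have "\<dots> = card (II m k :: 'n idx set)" by (rule card_ee[OF m])
  also have "\<dots> = card (Q (k-1) :: ('n \<Rightarrow> nat) set) * card (G m :: ('n \<Rightarrow> nat) set)"
    by (simp add: II_def card_cartesian_product)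
  finally have 2: "ps.dim ?V = card (Q (k-1) :: ('n \<Rightarrow> nat) set) * card (G m :: ('n \<Rightarrow> nat) set)" .
  have gpos: "card (G m :: ('n \<Rightarrow> nat) set) \<ge> 1"
    using zero_G finite_G by (metis One_nat_def Suc_leI card_gt_0_iff empty_iff)
  have q21: "card (Q (k-2) :: ('n \<Rightarrow> nat) set) \<le> card (Q (k-1) :: ('n \<Rightarrow> nat) set)"
    by (rule card_mono[OF finite_Q Q_mono]) simp
  have e: "(card (G m :: ('n \<Rightarrow> nat) set) - 1) * card (Q (k-1) :: ('n \<Rightarrow> nat) set) + card (Q (k-1) :: ('n \<Rightarrow> nat) set)
        = card (Q (k-1) :: ('n \<Rightarrow> nat) set) * card (G m :: ('n \<Rightarrow> nat) set)"
    using gpos by (cases "card (G m :: ('n \<Rightarrow> nat) set)") (auto simp: algebra_simps)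
  show ?thesis using 1 2 card_J1[of m k, where 'n='n] e q21 by linarith
qed

lemma upper:
  assumes m: "m \<ge> 1" and k: "k \<ge> 2"
  shows "ps.dim (U m k :: 'n::finite rpoly set) \<le> card (Q (k-2) :: ('n \<Rightarrow> nat) set)"
proof -
  let ?V = "range (Tc m k) :: 'n rpoly set"
  let ?W = "ee m ` (II m k :: 'n idx set)"
  let ?U = "U m k :: 'n rpoly set"
  have VW: "?V = ps.span ?W" by (rule span_ee[OF m, symmetric])
  have UV: "?U \<subseteq> ?V" using U_char[OF m k, where 'n='n] by auto
  have sU: "ps.subspace ?U"
    unfolding U_char[OF m k, where 'n='n]
  proof (rule ps.subspace_ker)
    show "ps.subspace ?V" unfolding VW by (rule ps.subspace_span)
    show "phi m j (x + y) = phi m j x + phi m j y" if "x \<in> ?V" "y \<in> ?V" for j x y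
      by (rule phi_add) (use that in auto)
    show "phi m j (pscale c x) = c * phi m j x" if "x \<in> ?V" for j c x
      by (rule phi_scale) (use that in auto)
  qed
  have "ps.dim ?U \<le> ps.dim {P\<in>?U. \<forall>j\<in>J2 k. phi m j P = 0} + card (J2 k :: ('n idx + ('n \<Rightarrow> nat)) set)"
  proof (rule ps.dim_cut[OF finite_J2 sU _ finite_imageI[OF finite_II]])
    show "?U \<subseteq> ps.span ?W" using UV VW by simp
    show "phi m j (x + y) = phi m j x + phi m j y" if "x \<in> ?U" "y \<in> ?U" for j x y
      by (rule phi_add) (use that UV in auto)
    show "phi m j (pscale c x) = c * phi m j x" if "x \<in> ?U" for j c x
      by (rule phi_scale) (use that UV in auto)
  qed
  moreover have "{P\<in>?U. \<forall>j\<in>J2 k. phi m j P = 0} \<subseteq> ps.span {}"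
  proof
    fix P assume P: "P \<in> {P\<in>?U. \<forall>j\<in>J2 k. phi m j P = 0}"
    then obtain c where Pc: "P = Tc m k c" and ph1: "\<And>j. j \<in> J1 m k \<Longrightarrow> phi m j P = 0"
      using U_char[OF m k, where 'n='n] by auto
    have ph2: "\<And>j. j \<in> J2 k \<Longrightarrow> phi m j P = 0" using P by auto
    have "\<forall>x\<in>II m k. c x = 0"
    proof (rule tri)
      fix q b :: "'n \<Rightarrow> nat" assume q: "q \<in> Q (k-1)" and b: "b \<in> G m" and h: "b \<noteq> (\<lambda>_. 0) \<or> sum q UNIV \<le> k-2"
      have "phi m (Inl (b,q)) P = 0"
      proof (cases "b = (\<lambda>_. 0)")
        case True
        then have "Inl (b,q) \<in> J2 k" using h unfolding J2_def Q_def by auto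
        then show ?thesis by (rule ph2)
      next
        case False
        then have "Inl (b,q) \<in> J1 m k" using q b unfolding J1_def by auto
        then show ?thesis by (rule ph1)
      qed
      then show "JF m k c b q = 0" unfolding Pc phi_Inl_Tc .
    next
      fix q :: "'n \<Rightarrow> nat" assume q: "q \<in> Q (k-1)" and sq: "sum q UNIV = k-1"
      have "Inr q \<in> J1 m k" using q sq k unfolding J1_def Q_def by auto
      then have "phi m (Inr q) P = 0" by (rule ph1)
      then have "Tc m k c (\<lambda>i. (m+1) * q i + m) = 0" unfolding phi_Inr Pc .
      then show "(\<Sum>a\<in>G m. c (q,a)) = 0" using top[OF q sq, of m c] by simp
    qed
    then have "Tc m k c = 0" unfolding Tc_def by (simp add: zero_fun_def)
    then show "P \<in> ps.span {}" using Pc by (simp add: ps.span_empty)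
  qed
  then have "ps.dim {P\<in>?U. \<forall>j\<in>J2 k. phi m j P = 0} \<le> card ({} :: 'n rpoly set)"
    by (rule ps.dim_le_card) simp
  ultimately show ?thesis using card_J2[of k, where 'n='n] by simp
qed



lemma card_Q: "card (Q d :: ('n::finite \<Rightarrow> nat) set) = (CARD('n) + d) choose CARD('n)"
proof -
  let ?n = "CARD('n)"
  obtain g where g: "bij_betw g {0..<?n} (UNIV :: 'n set)"
    using ex_bij_betw_nat_finite[of "UNIV::'n set"] by auto
  have ginj: "inj_on g {0..<?n}" using g by (rule bij_betw_imp_inj_on)
  have gsurj: "\<exists>j<?n. g j = i" for i
    using g unfolding bij_betw_def by (metis UNIV_I atLeastLessThan_iff imageE)
  define f where "f q = map (\<lambda>j. q (g j)) [0..<?n] @ [d - sum q UNIV]" for q :: "'n \<Rightarrow> nat"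
  let ?L = "{l::nat list. length l = ?n + 1 \<and> sum_list l = d}"
  have sumg: "sum_list (map (\<lambda>j. q (g j)) [0..<?n]) = sum q UNIV" for q :: "'n \<Rightarrow> nat"
  proof -
    have "sum_list (map (\<lambda>j. q (g j)) [0..<?n]) = (\<Sum>j\<in>{0..<?n}. q (g j))"
      by (subst interv_sum_list_conv_sum_set_nat) simp
    also have "\<dots> = sum q UNIV" by (rule sum.reindex_bij_betw[OF g])
    finally show ?thesis .
  qed
  have inj: "inj_on f (Q d)"
  proof (rule inj_onI)
    fix q q' assume "q \<in> Q d" "q' \<in> Q d" "f q = f q'"
    then have "map (\<lambda>j. q (g j)) [0..<?n] = map (\<lambda>j. q' (g j)) [0..<?n]"
      unfolding f_def by simp
    then have "q (g j) = q' (g j)" if "j < ?n" for j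
      using that by (simp add: map_eq_conv)
    then show "q = q'" using gsurj by (metis ext)
  qed
  have img: "f ` Q d = ?L"
  proof
    show "f ` Q d \<subseteq> ?L"
    proof
      fix l assume "l \<in> f ` Q d"
      then obtain q where q: "q \<in> Q d" "l = f q" by auto
      then show "l \<in> ?L" unfolding f_def using sumg[of q] by (simp add: Q_def)
    qed
  next
    show "?L \<subseteq> f ` Q d"
    proof
      fix l assume l: "l \<in> ?L"
      define q where "q i = l ! (the_inv_into {0..<?n} g i)" for i
      have qg: "q (g j) = l ! j" if "j < ?n" for j
        unfolding q_def using the_inv_into_f_f[OF ginj] that by simp
      have m: "map (\<lambda>j. q (g j)) [0..<?n] = take ?n l"
        by (rule nth_equalityI) (use l qg in auto)
      have sq: "sum q UNIV = sum_list (take ?n l)" using sumg[of q] m by simp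
      have ltake: "l = take ?n l @ [l ! ?n]" using l
        by (metis (mono_tags, lifting) lessI mem_Collect_eq take_Suc_conv_app_nth take_all_iff Suc_eq_plus1 order_refl)
      have "d = sum_list (take ?n l) + l ! ?n" using l ltake
        by (metis (mono_tags, lifting) mem_Collect_eq sum_list_append sum_list_simps add_0_right)
      then have "d - sum q UNIV = l ! ?n" and "sum q UNIV \<le> d" using sq by auto
      then have "f q = l" and "q \<in> Q d" unfolding f_def Q_def using m ltake by auto
      then show "l \<in> f ` Q d" by auto
    qed
  qed
  have "card (Q d :: ('n \<Rightarrow> nat) set) = card ?L" using card_image[OF inj] img by simp
  also have "\<dots> = (d + (?n + 1) - 1) choose d" by (rule card_length_sum_list)
  also have "\<dots> = (?n + d) choose ?n"
    using binomial_symmetric[of d "d + ?n"] by (simp add: add.commute)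
  finally show ?thesis .
qed

theorem lemma4p1:
  fixes m k :: nat
  assumes "m \<ge> 1" and "k \<ge> 2"
  shows "vector_space.dim pscale (U m k :: ('n::finite) rpoly set) = M (k - 1) CARD('n)
       \<and> M (k - 1) CARD('n) = (CARD('n) + k - 2) choose CARD('n)"
proof -
  have d: "ps.dim (U m k :: 'n rpoly set) = card (Q (k-2) :: ('n \<Rightarrow> nat) set)"
    using lower[OF assms, where 'n='n] upper[OF assms, where 'n='n] by linarith
  have e1: "CARD('n) + (k - 1) - 1 = CARD('n) + (k - 2)" using assms by simp
  have e2: "CARD('n) + k - 2 = CARD('n) + (k - 2)" using assms by simp
  show ?thesis unfolding M_def d card_Q e1 e2 by simp
qed


end
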